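(* Let $Q$ be a complete quiver with exactly two frozen vertices, and let $j$ be a mutable vertex which is cycle-preserving for $Q$ and is not the apex of a vortex in $Q$. Then $\mu_j(Q)$ is a brog quiver.
   Context: A quiver is a finite directed multigraph with no loops and no oriented 2-cycles, whose vertex set is partitioned into mutable and frozen vertices; arrows between two frozen vertices are ignored. $b_{ik}$ = number of arrows $i\to k$ minus number of arrows $k\to i$; $Q|_S$ is the induced subquiver on $S$. Mutation $\mu_j$ at mutable $j$: for each path $i\to j\to k$ add $b_{ij}b_{jk}$ arrows $i\to k$, reverse all arrows at $j$, cancel 2-cycles. Complete: at least one arrow between every pair of vertices at least one of which is mutable. A 3-vertex (sub)quiver is an oriented 3-cycle if it has at most one frozen vertex and its underlying directed graph is not acyclic. A mutable vertex $j$ is cycle-preserving for $Q$ if whenever $Q|_{\{i,j,k\}}$ is an oriented 3-cycle containing $j$, so is $\mu_j(Q)|_{\{i,j,k\}}$. A vortex is a quiver on four vertices, at least three mutable, in which one vertex (the apex) is a source or sink and the other three support an oriented cycle; $j$ is the apex of a vortex in $Q$ if it is the apex of some 4-vertex induced subquiver that is a vortex. A mutable vertex adjacent to at least one frozen vertex is red (resp. green) if all arrows between it and frozen vertices point towards (resp. away from) it. Two mutable vertices $i,j$ are complementary if for every frozen vertex $u$ with $b_{iu}\ne0$ and $b_{ju}\ne0$, $b_{iu}$ and $b_{ju}$ have opposite signs. A quiver is brog if its mutable vertices can be coloured blue, red, orange and green such that: (1) the vertices coloured red are exactly the red vertices; (2) the vertices coloured green are exactly the green vertices; (3) each blue vertex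 $i$ has $b_{ij}\ge0$ for every red $j$ and $b_{ij}\le0$ for every green $j$; (4) each orange vertex $i$ has $b_{ij}\ge0$ for every green $j$ and $b_{ij}\le0$ for every red $j$; (5) every blue vertex and every orange vertex are complementary. *)

theory Defs
  imports Main
begin

text \<open>A quiver without loops and oriented 2-cycles is encoded by its vertex set, its set of
frozen vertices and the skew-symmetric integer matrix b, where b i k = (#arrows i to k) -
(#arrows k to i). Arrows between two frozen vertices are ignored, i.e. b vanishes there.\<close>

record 'v quiver =
  verts  :: "'v set"
  frozen :: "'v set"
  bm     :: "'v \<Rightarrow> 'v \<Rightarrow> int"

definition mutable :: "'v quiver \<Rightarrow> 'v set" where
  "mutable Q = verts Q - frozen Q"

definition wf_quiver :: "'v quiver \<Rightarrow> bool" where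
  "wf_quiver Q \<longleftrightarrow> finite (verts Q) \<and> frozen Q \<subseteq> verts Q
    \<and> (\<forall>x y. bm Q x y = - bm Q y x)
    \<and> (\<forall>x y. x \<notin> verts Q \<longrightarrow> bm Q x y = 0)
    \<and> (\<forall>x y. x \<in> frozen Q \<longrightarrow> y \<in> frozen Q \<longrightarrow> bm Q x y = 0)"

definition mutate :: "'v \<Rightarrow> 'v quiver \<Rightarrow> 'v quiver" where
  "mutate j Q = Q\<lparr> bm := (\<lambda>i k.
      if i \<in> frozen Q \<and> k \<in> frozen Q then 0
      else if i = j \<or> k = j then - bm Q i k
      else bm Q i k + max (bm Q i j) 0 * max (bm Q j k) 0
                    - max (- bm Q i j) 0 * max (- bm Q j k) 0) \<rparr>"

definition complete :: "'v quiver \<Rightarrow> bool" where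
  "complete Q \<longleftrightarrow> (\<forall>x\<in>verts Q. \<forall>y\<in>verts Q. x \<noteq> y \<longrightarrow>
      (x \<notin> frozen Q \<or> y \<notin> frozen Q) \<longrightarrow> bm Q x y \<noteq> 0)"

definition arrows_on :: "'v quiver \<Rightarrow> 'v set \<Rightarrow> ('v \<times> 'v) set" where
  "arrows_on Q S = {(x, y). x \<in> S \<and> y \<in> S \<and> \<not> (x \<in> frozen Q \<and> y \<in> frozen Q)
                          \<and> bm Q x y > 0}"

definition oriented_3cycle :: "'v quiver \<Rightarrow> 'v set \<Rightarrow> bool" where
  "oriented_3cycle Q S \<longleftrightarrow> S \<subseteq> verts Q \<and> card S = 3 \<and> card (S \<inter> frozen Q) \<le> 1
     \<and> \<not> acyclic (arrows_on Q S)"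

definition cycle_preserving :: "'v quiver \<Rightarrow> 'v \<Rightarrow> bool" where
  "cycle_preserving Q j \<longleftrightarrow> j \<in> mutable Q \<and>
     (\<forall>i k. oriented_3cycle Q {i, j, k} \<longrightarrow> oriented_3cycle (mutate j Q) {i, j, k})"

definition vortex_with_apex :: "'v quiver \<Rightarrow> 'v set \<Rightarrow> 'v \<Rightarrow> bool" where
  "vortex_with_apex Q S a \<longleftrightarrow> S \<subseteq> verts Q \<and> card S = 4 \<and> card (S \<inter> frozen Q) \<le> 1
     \<and> a \<in> S
     \<and> ((\<forall>x\<in>S. (x, a) \<notin> arrows_on Q S) \<or> (\<forall>x\<in>S. (a, x) \<notin> arrows_on Q S))
     \<and> \<not> acyclic (arrows_on Q (S - {a}))"

definition is_vortex_apex :: "'v quiver \<Rightarrow> 'v \<Rightarrow> bool" where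
  "is_vortex_apex Q j \<longleftrightarrow> (\<exists>S. vortex_with_apex Q S j)"

definition red_vertex :: "'v quiver \<Rightarrow> 'v \<Rightarrow> bool" where
  "red_vertex Q i \<longleftrightarrow> i \<in> mutable Q \<and> (\<exists>u\<in>frozen Q. bm Q i u \<noteq> 0)
     \<and> (\<forall>u\<in>frozen Q. bm Q u i \<ge> 0)"

definition green_vertex :: "'v quiver \<Rightarrow> 'v \<Rightarrow> bool" where
  "green_vertex Q i \<longleftrightarrow> i \<in> mutable Q \<and> (\<exists>u\<in>frozen Q. bm Q i u \<noteq> 0)
     \<and> (\<forall>u\<in>frozen Q. bm Q i u \<ge> 0)"

definition complementary :: "'v quiver \<Rightarrow> 'v \<Rightarrow> 'v \<Rightarrow> bool" where
  "complementary Q i j \<longleftrightarrow> (\<forall>u\<in>frozen Q. bm Q i u \<noteq> 0 \<longrightarrow> bm Q j u \<noteq> 0 \<longrightarrow>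
      sgn (bm Q i u) \<noteq> sgn (bm Q j u))"

datatype colour = Blue | Red | Orange | Green

definition brog :: "'v quiver \<Rightarrow> bool" where
  "brog Q \<longleftrightarrow> (\<exists>c :: 'v \<Rightarrow> colour.
      (\<forall>i\<in>mutable Q. c i = Red \<longleftrightarrow> red_vertex Q i)
    \<and> (\<forall>i\<in>mutable Q. c i = Green \<longleftrightarrow> green_vertex Q i)
    \<and> (\<forall>i\<in>mutable Q. \<forall>j\<in>mutable Q. c i = Blue \<longrightarrow>
          (c j = Red \<longrightarrow> bm Q i j \<ge> 0) \<and> (c j = Green \<longrightarrow> bm Q i j \<le> 0))
    \<and> (\<forall>i\<in>mutable Q. \<forall>j\<in>mutable Q. c i = Orange \<longrightarrow>
          (c j = Green \<longrightarrow> bm Q i j \<ge> 0) \<and> (c j = Red \<longrightarrow> bm Q i j \<le> 0))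
    \<and> (\<forall>i\<in>mutable Q. \<forall>j\<in>mutable Q. c i = Blue \<longrightarrow> c j = Orange \<longrightarrow> complementary Q i j))"

end

theory Submission
  imports Defs
begin

lemma acyc_rank:
  fixes f :: "'a \<Rightarrow> nat"
  assumes "\<forall>(a,b)\<in>r. f a < f b" shows "acyclic r"
proof -
  have "r \<subseteq> inv_image less_than f" using assms by auto
  moreover have "wf (inv_image less_than f)" by simp
  ultimately have "wf r" using wf_subset by blast
  thus ?thesis by (rule wf_acyclic)
qed

lemma cyc3: "(x,y)\<in>r \<Longrightarrow> (y,z)\<in>r \<Longrightarrow> (z,x)\<in>r \<Longrightarrow> \<not> acyclic r"
  unfolding acyclic_def by (meson trancl.r_into_trancl trancl_trans)

lemma acyc3:
  assumes sk: "\<forall>p q. bm R p q = - bm R q p" and d: "a\<noteq>b" "b\<noteq>c" "a\<noteq>c"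
    and n: "bm R a b \<le> 0" "bm R b c \<le> 0" "bm R a c \<le> 0"
  shows "acyclic (arrows_on R {a,b,c})"
proof (rule acyc_rank[where f="\<lambda>z. if z = c then 0 else if z = b then 1 else (2::nat)"], safe)
  fix p q assume "(p,q) \<in> arrows_on R {a,b,c}"
  then have pq: "p \<in> {a,b,c}" "q \<in> {a,b,c}" "bm R p q > 0" unfolding arrows_on_def by auto
  have z: "\<And>x. bm R x x = 0" proof - fix x have "bm R x x = - bm R x x" using sk by blast then show "bm R x x = 0" by simp qed
  have s: "bm R b a \<ge> 0" "bm R c b \<ge> 0" "bm R c a \<ge> 0" using sk n by (metis neg_0_le_iff_le)+
  show "(if p = c then 0 else if p = b then 1 else (2::nat)) < (if q = c then 0 else if q = b then 1 else 2)"
    using pq d n z s by (auto)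
qed

lemma card_le1_3:
  assumes "j \<notin> F" "\<not> (x \<in> F \<and> y \<in> F)"
  shows "card ({x,j,y} \<inter> F) \<le> 1"
proof -
  consider "x \<in> F" | "y \<in> F" | "x \<notin> F" "y \<notin> F" using assms by blast
  then show ?thesis
  proof cases
    case 1 then have "{x,j,y} \<inter> F = {x}" using assms by auto
    then show ?thesis by simp
  next
    case 2 then have "{x,j,y} \<inter> F = {y}" using assms by auto
    then show ?thesis by simp
  next
    case 3 then have "{x,j,y} \<inter> F = {}" using assms by auto
    then show ?thesis by simp
  qed
qed

lemma card_le1_4:
  assumes "j \<notin> F" "\<not> (x \<in> F \<and> y \<in> F)" "\<not> (y \<in> F \<and> z \<in> F)" "\<not> (x \<in> F \<and> z \<in> F)"
  shows "card ({j,x,y,z} \<inter> F) \<le> 1"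
proof -
  consider "x \<in> F" | "y \<in> F" | "z \<in> F" | "x \<notin> F" "y \<notin> F" "z \<notin> F" by blast
  then show ?thesis
  proof cases
    case 1 then have "{j,x,y,z} \<inter> F = {x}" using assms by auto
    then show ?thesis by simp
  next
    case 2 then have "{j,x,y,z} \<inter> F = {y}" using assms by auto
    then show ?thesis by simp
  next
    case 3 then have "{j,x,y,z} \<inter> F = {z}" using assms by auto
    then show ?thesis by simp
  next
    case 4 then have "{j,x,y,z} \<inter> F = {}" using assms by auto
    then show ?thesis by simp
  qed
qed

lemma mut_simps[simp]: "verts (mutate j Q) = verts Q" "frozen (mutate j Q) = frozen Q"
  "mutable (mutate j Q) = mutable Q"
  by (simp_all add: mutate_def mutable_def)

lemma mut_skew:
  assumes "wf_quiver Q" shows "bm (mutate j Q) x y = - bm (mutate j Q) y x"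
proof -
  have sk: "\<And>a b. bm Q a b = - bm Q b a" using assms unfolding wf_quiver_def by blast
  have e1: "bm Q y x = - bm Q x y" "bm Q y j = - bm Q j y" "bm Q j x = - bm Q x j" using sk by blast+
  show ?thesis
  proof (cases "x \<in> frozen Q \<and> y \<in> frozen Q")
    case True then show ?thesis by (simp add: mutate_def)
  next
    case F1: False
    show ?thesis
    proof (cases "x = j \<or> y = j")
      case True then show ?thesis using F1 e1(1) by (auto simp: mutate_def)
    next
      case False
      have a: "bm (mutate j Q) x y = bm Q x y + max (bm Q x j) 0 * max (bm Q j y) 0
                    - max (- bm Q x j) 0 * max (- bm Q j y) 0" using F1 False by (auto simp: mutate_def)
      have b: "bm (mutate j Q) y x = bm Q y x + max (bm Q y j) 0 * max (bm Q j x) 0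
                    - max (- bm Q y j) 0 * max (- bm Q j x) 0" using F1 False by (auto simp: mutate_def)
      show ?thesis unfolding a b e1 by (simp add: mult.commute)
    qed
  qed
qed

lemma mut_pos:
  assumes wf: "wf_quiver Q" and cpl: "complete Q" and cp: "cycle_preserving Q j"
    and jm: "j \<in> mutable Q"
    and xv: "x \<in> verts Q" "y \<in> verts Q" and d: "x \<noteq> y" "x \<noteq> j" "y \<noteq> j"
    and nf: "\<not> (x \<in> frozen Q \<and> y \<in> frozen Q)"
    and p: "bm Q x j > 0" "bm Q j y > 0"
  shows "bm (mutate j Q) x y > 0"
proof -
  have sk: "\<And>a b. bm Q a b = - bm Q b a" using wf unfolding wf_quiver_def by blast
  have eq: "bm (mutate j Q) x y = bm Q x y + bm Q x j * bm Q j y" using p nf d by (auto simp: mutate_def)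
  have pp: "bm Q x j * bm Q j y > 0" using p by simp
  show ?thesis
  proof (cases "bm Q x y > 0")
    case True then show ?thesis using eq pp by simp
  next
    case False
    have "bm Q x y \<noteq> 0" using cpl xv d nf unfolding complete_def by auto
    hence neg: "bm Q y x > 0" using False sk[of y x] by simp
    have jv: "j \<in> verts Q" "j \<notin> frozen Q" using jm unfolding mutable_def by auto
    have "\<not> acyclic (arrows_on Q {x,j,y})"
      by (rule cyc3[of x j _ y]) (use p neg jv xv nf in \<open>auto simp: arrows_on_def\<close>)
    then have o: "oriented_3cycle Q {x,j,y}"
      unfolding oriented_3cycle_def using xv jv d card_le1_3[OF jv(2) nf] by auto
    then have "oriented_3cycle (mutate j Q) {x,j,y}" using cp unfolding cycle_preserving_def by blast
    hence na: "\<not> acyclic (arrows_on (mutate j Q) {x,j,y})" unfolding oriented_3cycle_def by blast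
    show ?thesis
    proof (rule ccontr)
      assume "\<not> ?thesis"
      have "acyclic (arrows_on (mutate j Q) {x,j,y})"
      proof -
        have S: "\<forall>p q. bm (mutate j Q) p q = - bm (mutate j Q) q p" using mut_skew[OF wf] by blast
        have "bm (mutate j Q) x j \<le> 0" "bm (mutate j Q) j y \<le> 0" using p jv by (auto simp: mutate_def)
        then show ?thesis using acyc3[OF S d(2) d(3)[symmetric] d(1)] \<open>\<not> bm (mutate j Q) x y > 0\<close> by simp
      qed
      with na show False by simp
    qed
  qed
qed

lemma mut_neg:
  assumes wf: "wf_quiver Q" and cpl: "complete Q" and cp: "cycle_preserving Q j"
    and jm: "j \<in> mutable Q"
    and xv: "x \<in> verts Q" "y \<in> verts Q" and d: "x \<noteq> y" "x \<noteq> j" "y \<noteq> j"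
    and nf: "\<not> (x \<in> frozen Q \<and> y \<in> frozen Q)"
    and p: "bm Q x j < 0" "bm Q j y < 0"
  shows "bm (mutate j Q) x y < 0"
proof -
  have sk: "\<And>a b. bm Q a b = - bm Q b a" using wf unfolding wf_quiver_def by blast
  have "bm (mutate j Q) y x > 0"
    by (rule mut_pos[OF wf cpl cp jm]) (use xv d nf p sk[of y j] sk[of j x] in auto)
  then show ?thesis using mut_skew[OF wf, of j x y] by simp
qed

lemma mut_mixed:
  assumes nf: "\<not> (x \<in> frozen Q \<and> y \<in> frozen Q)" and d: "x \<noteq> j" "y \<noteq> j"
    and p: "bm Q x j \<le> 0 \<or> bm Q j y \<le> 0" "bm Q x j \<ge> 0 \<or> bm Q j y \<ge> 0"
  shows "bm (mutate j Q) x y = bm Q x y"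
  using assms by (auto simp: mutate_def max_def)


lemma mut_j1: "x \<noteq> j \<or> j \<notin> frozen Q \<Longrightarrow> j \<notin> frozen Q \<Longrightarrow> bm (mutate j Q) j x = - bm Q j x"
  by (simp add: mutate_def)
lemma mut_j2: "j \<notin> frozen Q \<Longrightarrow> bm (mutate j Q) x j = - bm Q x j"
  by (simp add: mutate_def)

lemma no_vortex_tri:
  assumes wf: "wf_quiver Q" and jm: "j \<in> mutable Q" and nv: "\<not> is_vortex_apex Q j"
    and xv: "x \<in> verts Q" "y \<in> verts Q" "z \<in> verts Q" and d: "x \<noteq> y" "y \<noteq> z" "x \<noteq> z"
    and nf: "\<not> (x \<in> frozen Q \<and> y \<in> frozen Q)" "\<not> (y \<in> frozen Q \<and> z \<in> frozen Q)"
            "\<not> (x \<in> frozen Q \<and> z \<in> frozen Q)"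
    and dir: "(bm (mutate j Q) j x > 0 \<and> bm (mutate j Q) j y > 0 \<and> bm (mutate j Q) j z > 0)
           \<or> (bm (mutate j Q) x j > 0 \<and> bm (mutate j Q) y j > 0 \<and> bm (mutate j Q) z j > 0)"
    and cyc: "bm (mutate j Q) x y > 0" "bm (mutate j Q) y z > 0" "bm (mutate j Q) z x > 0"
  shows False
proof -
  have sk: "\<And>a b. bm Q a b = - bm Q b a" using wf unfolding wf_quiver_def by blast
  have jv: "j \<in> verts Q" "j \<notin> frozen Q" using jm unfolding mutable_def by auto
  have jj: "bm (mutate j Q) j j = 0" using jv sk[of j j] by (simp add: mutate_def)
  have nj: "x \<noteq> j" "y \<noteq> j" "z \<noteq> j" using dir jj by auto
  let ?S = "{j,x,y,z}"
  have SS: "?S - {j} = {x,y,z}" using nj by auto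
  have Sv: "?S \<subseteq> verts Q" using xv jv by auto
  have cS: "card ?S = 4" using nj d by simp
  have cF: "card (?S \<inter> frozen Q) \<le> 1" by (rule card_le1_4[OF jv(2) nf(1) nf(2) nf(3)])
  from dir show False
  proof
    assume a: "bm (mutate j Q) j x > 0 \<and> bm (mutate j Q) j y > 0 \<and> bm (mutate j Q) j z > 0"
    then have q: "bm Q j x < 0" "bm Q j y < 0" "bm Q j z < 0" using jv by (auto simp: mutate_def)
    then have q': "bm Q x j > 0" "bm Q y j > 0" "bm Q z j > 0" using sk by (metis neg_0_less_iff_less)+
    have e: "bm (mutate j Q) x y = bm Q x y" "bm (mutate j Q) y z = bm Q y z" "bm (mutate j Q) z x = bm Q z x"
      using mut_mixed[of x Q y j] mut_mixed[of y Q z j] mut_mixed[of z Q x j] nf nj q q' by auto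
    have "\<not> acyclic (arrows_on Q (?S - {j}))" unfolding SS
      by (rule cyc3[of x y _ z]) (use cyc e xv nf in \<open>auto simp: arrows_on_def\<close>)
    moreover have "\<forall>p\<in>?S. (j, p) \<notin> arrows_on Q ?S" using q sk[of j j] by (auto simp: arrows_on_def)
    ultimately have "vortex_with_apex Q ?S j" unfolding vortex_with_apex_def using Sv cS cF by blast
    with nv show False unfolding is_vortex_apex_def by blast
  next
    assume a: "bm (mutate j Q) x j > 0 \<and> bm (mutate j Q) y j > 0 \<and> bm (mutate j Q) z j > 0"
    then have q: "bm Q x j < 0" "bm Q y j < 0" "bm Q z j < 0" using jv by (auto simp: mutate_def)
    then have q': "bm Q j x > 0" "bm Q j y > 0" "bm Q j z > 0" using sk by (metis neg_0_less_iff_less)+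
    have e: "bm (mutate j Q) x y = bm Q x y" "bm (mutate j Q) y z = bm Q y z" "bm (mutate j Q) z x = bm Q z x"
      using mut_mixed[of x Q y j] mut_mixed[of y Q z j] mut_mixed[of z Q x j] nf nj q q' by auto
    have "\<not> acyclic (arrows_on Q (?S - {j}))" unfolding SS
      by (rule cyc3[of x y _ z]) (use cyc e xv nf in \<open>auto simp: arrows_on_def\<close>)
    moreover have "\<forall>p\<in>?S. (p, j) \<notin> arrows_on Q ?S" using q sk[of j j] by (auto simp: arrows_on_def)
    ultimately have "vortex_with_apex Q ?S j" unfolding vortex_with_apex_def using Sv cS cF by blast
    with nv show False unfolding is_vortex_apex_def by blast
  qed
qed


theorem mainTheorem13:
  fixes Q :: "'v quiver" and j :: 'v
  assumes "wf_quiver Q"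
    and "complete Q"
    and "card (frozen Q) = 2"
    and "j \<in> mutable Q"
    and "cycle_preserving Q j"
    and "\<not> is_vortex_apex Q j"
  shows "brog (mutate j Q)"
proof -
  note wf = assms(1) and cpl = assms(2) and jm = assms(4) and cp = assms(5) and nv = assms(6)
  define B where "B = bm (mutate j Q)"
  have skQ: "\<And>a b. bm Q a b = - bm Q b a" using wf unfolding wf_quiver_def by blast
  have sk: "\<And>a b. B a b = - B b a" unfolding B_def by (rule mut_skew[OF wf])
  have sk0: "\<And>a. B a a = 0" proof - fix a show "B a a = 0" using sk[of a a] by simp qed
  have fv: "frozen Q \<subseteq> verts Q" using wf unfolding wf_quiver_def by blast
  obtain u v where uv: "frozen Q = {u,v}" "u \<noteq> v" using assms(3) unfolding card_2_iff by blast
  have jv: "j \<in> verts Q" "j \<notin> frozen Q" using jm unfolding mutable_def by auto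
  have uvv: "u \<in> verts Q" "v \<in> verts Q" using fv uv by auto
  have mut: "\<And>x. x \<in> mutable Q \<longleftrightarrow> x \<in> verts Q \<and> x \<notin> frozen Q" unfolding mutable_def by auto
  have cplQ: "\<And>x y. x \<in> verts Q \<Longrightarrow> y \<in> verts Q \<Longrightarrow> x \<noteq> y \<Longrightarrow> \<not> (x \<in> frozen Q \<and> y \<in> frozen Q)
      \<Longrightarrow> bm Q x y \<noteq> 0" using cpl unfolding complete_def by blast
  have Bj1: "\<And>x. B j x = - bm Q j x" unfolding B_def using jv by (simp add: mutate_def)
  have Bj2: "\<And>x. B x j = - bm Q x j" unfolding B_def using jv by (simp add: mutate_def)
  have C: "\<And>x y. x \<in> verts Q \<Longrightarrow> y \<in> verts Q \<Longrightarrow> x \<noteq> y \<Longrightarrow> \<not> (x \<in> frozen Q \<and> y \<in> frozen Q)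
      \<Longrightarrow> B x y \<noteq> 0"
  proof -
    fix x y assume h: "x \<in> verts Q" "y \<in> verts Q" "x \<noteq> y" "\<not> (x \<in> frozen Q \<and> y \<in> frozen Q)"
    show "B x y \<noteq> 0"
    proof (cases "x = j \<or> y = j")
      case True then show ?thesis using Bj1 Bj2 cplQ[OF h] by auto
    next
      case False
      have a: "bm Q x j \<noteq> 0" "bm Q j y \<noteq> 0" using cplQ[OF h(1) jv(1)] cplQ[OF jv(1) h(2)] False jv by auto
      consider "bm Q x j > 0" "bm Q j y > 0" | "bm Q x j < 0" "bm Q j y < 0"
        | "bm Q x j \<le> 0 \<or> bm Q j y \<le> 0" "bm Q x j \<ge> 0 \<or> bm Q j y \<ge> 0" by linarith
      then show ?thesis
      proof cases
        case 1 then show ?thesis unfolding B_def using mut_pos[OF wf cpl cp jm h(1,2,3) _ _ h(4)] False by auto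
      next
        case 2 then show ?thesis unfolding B_def using mut_neg[OF wf cpl cp jm h(1,2,3) _ _ h(4)] False by auto
      next
        case 3 then show ?thesis unfolding B_def using mut_mixed[OF h(4)] False cplQ[OF h] by auto
      qed
    qed
  qed
  have P: "\<And>x y. x \<in> verts Q \<Longrightarrow> y \<in> verts Q \<Longrightarrow> \<not> (x \<in> frozen Q \<and> y \<in> frozen Q)
      \<Longrightarrow> B x j > 0 \<Longrightarrow> B j y > 0 \<Longrightarrow> B y x > 0"
  proof -
    fix x y assume h: "x \<in> verts Q" "y \<in> verts Q" "\<not> (x \<in> frozen Q \<and> y \<in> frozen Q)" "B x j > 0" "B j y > 0"
    have d: "x \<noteq> j" "y \<noteq> j" using h sk0 by auto
    have d2: "x \<noteq> y" using h sk[of x j] by auto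
    have "bm (mutate j Q) x y < 0"
      by (rule mut_neg[OF wf cpl cp jm h(1,2) d2 d h(3)]) (use h Bj1 Bj2 in auto)
    then show "B y x > 0" using sk[of y x] unfolding B_def by simp
  qed
  have T: "\<And>a b w. a \<in> mutable Q \<Longrightarrow> b \<in> mutable Q \<Longrightarrow> a \<noteq> b \<Longrightarrow> w \<in> frozen Q \<Longrightarrow>
      \<not> (B j a > 0 \<and> B j b > 0 \<and> B j w > 0 \<and> B a b > 0 \<and> B b w > 0 \<and> B w a > 0)
    \<and> \<not> (B a j > 0 \<and> B b j > 0 \<and> B w j > 0 \<and> B a b > 0 \<and> B b w > 0 \<and> B w a > 0)"
  proof -
    fix a b w assume h: "a \<in> mutable Q" "b \<in> mutable Q" "a \<noteq> b" "w \<in> frozen Q"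
    have hv: "a \<in> verts Q" "b \<in> verts Q" "w \<in> verts Q" "a \<notin> frozen Q" "b \<notin> frozen Q"
      using h fv mut by auto
    have d: "b \<noteq> w" "a \<noteq> w" using hv h by auto
    show "?thesis a b w"
      using no_vortex_tri[OF wf jm nv hv(1,2,3) h(3) d(1) d(2)] hv unfolding B_def by blast
  qed
  define c where "c = (\<lambda>x. if B u x > 0 \<and> B v x > 0 then Red else if B x u > 0 \<and> B x v > 0 then Green
     else if x = j then Orange else Blue)"
  have nzu: "\<And>i. i \<in> mutable Q \<Longrightarrow> B i u \<noteq> 0 \<and> B i v \<noteq> 0"
    using C uvv uv mut by (metis insertCI)
  have red: "\<And>i. i \<in> mutable Q \<Longrightarrow> red_vertex (mutate j Q) i \<longleftrightarrow> B u i > 0 \<and> B v i > 0"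
  proof -
    fix i assume i: "i \<in> mutable Q"
    show "?thesis i" using nzu[OF i] sk[of u i] sk[of v i] i unfolding red_vertex_def B_def uv mut_simps by auto
  qed
  have green: "\<And>i. i \<in> mutable Q \<Longrightarrow> green_vertex (mutate j Q) i \<longleftrightarrow> B i u > 0 \<and> B i v > 0"
  proof -
    fix i assume i: "i \<in> mutable Q"
    show "?thesis i" using nzu[OF i] sk[of u i] sk[of v i] i unfolding green_vertex_def B_def uv mut_simps by auto
  qed
  have mixed: "\<And>i. i \<in> mutable Q \<Longrightarrow> c i = Blue \<or> c i = Orange \<Longrightarrow>
     (B i u > 0 \<and> B v i > 0) \<or> (B u i > 0 \<and> B i v > 0)"
  proof -
    fix i assume i: "i \<in> mutable Q" "c i = Blue \<or> c i = Orange"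
    show "?thesis i" using i nzu[OF i(1)] sk[of u i] sk[of v i] unfolding c_def
      by (auto split: if_splits)
  qed
  have one: "\<And>a. a \<in> mutable Q \<Longrightarrow> a \<noteq> j \<Longrightarrow>
      B a j \<noteq> 0 \<and> B j u \<noteq> 0 \<and> B j v \<noteq> 0 \<and> B a u \<noteq> 0 \<and> B a v \<noteq> 0
    \<and> (B a j > 0 \<and> B j u > 0 \<longrightarrow> B u a > 0) \<and> (B u j > 0 \<and> B j a > 0 \<longrightarrow> B a u > 0)
    \<and> (B a j > 0 \<and> B j v > 0 \<longrightarrow> B v a > 0) \<and> (B v j > 0 \<and> B j a > 0 \<longrightarrow> B a v > 0)"
  proof -
    fix a assume a: "a \<in> mutable Q" "a \<noteq> j"
    have av: "a \<in> verts Q" "a \<notin> frozen Q" using a mut by auto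
    have uj: "u \<noteq> j" "v \<noteq> j" "a \<noteq> u" "a \<noteq> v" using uv jv av by auto
    show "?thesis a"
      using C[OF av(1) jv(1) a(2)] C[OF jv(1) uvv(1)] C[OF jv(1) uvv(2)] C[OF av(1) uvv(1)] C[OF av(1) uvv(2)]
        P[OF av(1) uvv(1)] P[OF uvv(1) av(1)] P[OF av(1) uvv(2)] P[OF uvv(2) av(1)] uj av jv
      by auto
  qed
  have two: "\<And>a b. a \<in> mutable Q \<Longrightarrow> b \<in> mutable Q \<Longrightarrow> a \<noteq> b \<Longrightarrow>
      B a b \<noteq> 0 \<and> (B a j > 0 \<and> B j b > 0 \<longrightarrow> B b a > 0) \<and> (B b j > 0 \<and> B j a > 0 \<longrightarrow> B a b > 0)
    \<and> \<not> (B j a > 0 \<and> B j b > 0 \<and> B j u > 0 \<and> B a b > 0 \<and> B b u > 0 \<and> B u a > 0)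
    \<and> \<not> (B a j > 0 \<and> B b j > 0 \<and> B u j > 0 \<and> B a b > 0 \<and> B b u > 0 \<and> B u a > 0)
    \<and> \<not> (B j a > 0 \<and> B j b > 0 \<and> B j v > 0 \<and> B a b > 0 \<and> B b v > 0 \<and> B v a > 0)
    \<and> \<not> (B a j > 0 \<and> B b j > 0 \<and> B v j > 0 \<and> B a b > 0 \<and> B b v > 0 \<and> B v a > 0)
    \<and> \<not> (B j a > 0 \<and> B j b > 0 \<and> B j u > 0 \<and> B b a > 0 \<and> B a u > 0 \<and> B u b > 0)
    \<and> \<not> (B a j > 0 \<and> B b j > 0 \<and> B u j > 0 \<and> B b a > 0 \<and> B a u > 0 \<and> B u b > 0)
    \<and> \<not> (B j a > 0 \<and> B j b > 0 \<and> B j v > 0 \<and> B b a > 0 \<and> B a v > 0 \<and> B v b > 0)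
    \<and> \<not> (B a j > 0 \<and> B b j > 0 \<and> B v j > 0 \<and> B b a > 0 \<and> B a v > 0 \<and> B v b > 0)"
  proof -
    fix a b assume a: "a \<in> mutable Q" "b \<in> mutable Q" "a \<noteq> b"
    have av: "a \<in> verts Q" "a \<notin> frozen Q" "b \<in> verts Q" "b \<notin> frozen Q" using a mut by auto
    have uF: "u \<in> frozen Q" "v \<in> frozen Q" using uv by auto
    show "?thesis a b"
      using C[OF av(1) av(3) a(3)] P[OF av(1) av(3)] P[OF av(3) av(1)] av
        T[OF a(1) a(2) a(3) uF(1)] T[OF a(1) a(2) a(3) uF(2)]
        T[OF a(2) a(1) a(3)[symmetric] uF(1)] T[OF a(2) a(1) a(3)[symmetric] uF(2)]
      by auto
  qed
  have cj: "c j \<noteq> Blue" unfolding c_def by auto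
  have G1: "\<forall>i\<in>mutable (mutate j Q). c i = Red \<longleftrightarrow> red_vertex (mutate j Q) i"
    using red unfolding c_def by auto
  have G2: "\<forall>i\<in>mutable (mutate j Q). c i = Green \<longleftrightarrow> green_vertex (mutate j Q) i"
  proof
    fix i assume i: "i \<in> mutable (mutate j Q)"
    show "c i = Green \<longleftrightarrow> green_vertex (mutate j Q) i"
      using green[of i] i sk[of u i] unfolding c_def by auto
  qed
  have G3: "\<forall>i\<in>mutable (mutate j Q). \<forall>k\<in>mutable (mutate j Q). c i = Blue \<longrightarrow>
          (c k = Red \<longrightarrow> B i k \<ge> 0) \<and> (c k = Green \<longrightarrow> B i k \<le> 0)"
  proof (intro ballI impI)
    fix i k assume i: "i \<in> mutable (mutate j Q)" and k: "k \<in> mutable (mutate j Q)" and ci: "c i = Blue"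
    have ij: "i \<noteq> j" using ci cj by auto
    have iQ: "i \<in> mutable Q" and kQ: "k \<in> mutable Q" using i k by auto
    have mi: "(B i u > 0 \<and> B v i > 0) \<or> (B u i > 0 \<and> B i v > 0)" using mixed[of i] i ci by auto
    show "(c k = Red \<longrightarrow> B i k \<ge> 0) \<and> (c k = Green \<longrightarrow> B i k \<le> 0)"
    proof (cases "k = j")
      case True
      show ?thesis unfolding True using one[OF iQ ij] ij ci mi sk[of i j] sk[of i u] sk[of i v] unfolding c_def
        by (smt (verit) colour.distinct)
    next
      case False
      show ?thesis
      proof (cases "i = k")
        case True then show ?thesis using ci by auto
      next
        case ik: False
        show ?thesis using one[OF iQ ij] one[OF kQ False] two[OF iQ kQ ik] ij False ik ci mi
          sk[of i j] sk[of i u] sk[of i v] sk[of k j] sk[of k u] sk[of k v] sk[of i k] sk[of j u] sk[of j v]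
          unfolding c_def by (smt (verit) colour.distinct)
      qed
    qed
  qed
  have G4: "\<forall>i\<in>mutable (mutate j Q). \<forall>k\<in>mutable (mutate j Q). c i = Orange \<longrightarrow>
          (c k = Green \<longrightarrow> B i k \<ge> 0) \<and> (c k = Red \<longrightarrow> B i k \<le> 0)"
  proof (intro ballI impI)
    fix i k assume i: "i \<in> mutable (mutate j Q)" and k: "k \<in> mutable (mutate j Q)" and ci: "c i = Orange"
    have ij: "i = j" using ci unfolding c_def by (auto split: if_splits)
    have mi: "(B i u > 0 \<and> B v i > 0) \<or> (B u i > 0 \<and> B i v > 0)" using mixed[of i] i ci by auto
    show "(c k = Green \<longrightarrow> B i k \<ge> 0) \<and> (c k = Red \<longrightarrow> B i k \<le> 0)"
    proof (cases "k = j")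
      case True then show ?thesis using ci ij by auto
    next
      case False
      have kQ: "k \<in> mutable Q" using k by auto
      show ?thesis unfolding ij using one[OF kQ False] False ci mi[unfolded ij]
          sk[of k j] sk[of k u] sk[of k v] sk[of j u] sk[of j v]
          unfolding c_def by (smt (verit) colour.distinct)
    qed
  qed
  have G5: "\<forall>i\<in>mutable (mutate j Q). \<forall>k\<in>mutable (mutate j Q). c i = Blue \<longrightarrow> c k = Orange
      \<longrightarrow> complementary (mutate j Q) i k"
  proof (intro ballI impI)
    fix i k assume i: "i \<in> mutable (mutate j Q)" and k: "k \<in> mutable (mutate j Q)" and ci: "c i = Blue"
      and ck: "c k = Orange"
    have kj: "k = j" using ck unfolding c_def by (auto split: if_splits)
    have ij: "i \<noteq> j" using ci cj by auto
    have mi: "(B i u > 0 \<and> B v i > 0) \<or> (B u i > 0 \<and> B i v > 0)" using mixed[of i] i ci by auto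
    have iQ: "i \<in> mutable Q" using i by simp
    have mk: "(B k u > 0 \<and> B v k > 0) \<or> (B u k > 0 \<and> B k v > 0)" using mixed[of k] k ck by auto
    have opp: "(B i u > 0 \<and> B v i > 0 \<and> B u k > 0 \<and> B k v > 0) \<or> (B u i > 0 \<and> B i v > 0 \<and> B k u > 0 \<and> B v k > 0)"
      unfolding kj using one[OF iQ ij] ij mi mk[unfolded kj] sk[of i j] sk[of i u] sk[of i v] sk[of j u] sk[of j v]
      by (smt (verit))
    show "complementary (mutate j Q) i k"
      unfolding complementary_def mut_simps uv B_def[symmetric]
      using opp sk[of u i] sk[of v i] sk[of u k] sk[of v k] by (auto simp: sgn_if)
  qed
  show ?thesis unfolding brog_def B_def[symmetric]
    by (rule exI[of _ c], intro conjI, fact G1, fact G2, fact G3, fact G4, fact G5)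
qed

end
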